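(* Let $\overset{1}{\nabla}$ be a concircularly semi-symmetric metric connection on an $n$-dimensional pseudo-Riemannian manifold $(\mathcal M,g)$ with generator $\pi$ and associated vector field $P$. Then $\overset{0}{E}=\overset{g}{E}+\frac{n-1}{4n}\pi(P)g-\frac{n-1}{4}\pi\otimes\pi$, $\overset{1}{E}=\overset{2}{E}=\overset{3}{E}=\overset{g}{E}$, $\overset{4}{E}=\overset{g}{E}+\frac{n-1}{n}\pi(P)g-(n-1)\pi\otimes\pi$, $\overset{5}{E}=\overset{g}{E}+\frac{n-1}{2n}\pi(P)g-\frac{n-1}{2}\pi\otimes\pi$. In particular the traceless Ricci tensor $\overset{g}{E}$ is invariant under the change of connection $\overset{g}{\nabla}\to\overset{1}{\nabla}$.
   Context: Let $(\mathcal M,g)$ be an $n$-dimensional pseudo-Riemannian manifold with Levi-Civita connection $\overset{g}{\nabla}$, let $P$ be a vector field and $\pi=g(\cdot,P)$ its associated 1-form. The semi-symmetric metric connection generated by $\pi$ is $\overset{1}{\nabla}_XY=\overset{g}{\nabla}_XY+\pi(Y)X-g(X,Y)P$; it satisfies $\overset{1}{\nabla}g=0$ and has torsion $\overset{1}{T}(X,Y)=\pi(Y)X-\pi(X)Y$. It is called a concircularly semi-symmetric metric connection if there is a smooth function $\omega$ on $\mathcal M$ such that $(\overset{g}{\nabla}_X\pi)(Y)-\pi(X)\pi(Y)=\omega\, g(X,Y)$ for all vector fields $X,Y$. Curvature tensors: $\overset{1}{R}(X,Y)Z=\overset{1}{\nabla}_X\overset{1}{\nabla}_YZ-\overset{1}{\nabla}_Y\overset{1}{\nabla}_XZ-\overset{1}{\nabla}_{[X,Y]}Z$,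 and with $\mathfrak S_{XYZ}$ the cyclic sum over $X,Y,Z$: $\overset{0}{R}(X,Y)Z=\overset{1}{R}(X,Y)Z-\tfrac12(\overset{1}{\nabla}_X\overset{1}{T})(Y,Z)+\tfrac12(\overset{1}{\nabla}_Y\overset{1}{T})(X,Z)-\tfrac14\mathfrak S_{XYZ}\overset{1}{T}(\overset{1}{T}(X,Y),Z)-\tfrac14\overset{1}{T}(\overset{1}{T}(X,Y),Z)$; $\overset{2}{R}(X,Y)Z=\overset{1}{R}(X,Y)Z-(\overset{1}{\nabla}_X\overset{1}{T})(Y,Z)+(\overset{1}{\nabla}_Y\overset{1}{T})(X,Z)-\mathfrak S_{XYZ}\overset{1}{T}(\overset{1}{T}(X,Y),Z)$; $\overset{3}{R}(X,Y)Z=\overset{1}{R}(X,Y)Z+(\overset{1}{\nabla}_Y\overset{1}{T})(X,Z)$; $\overset{4}{R}(X,Y)Z=\overset{1}{R}(X,Y)Z+(\overset{1}{\nabla}_Y\overset{1}{T})(X,Z)-\overset{1}{T}(\overset{1}{T}(X,Y),Z)$; $\overset{5}{R}(X,Y)Z=\overset{1}{R}(X,Y)Z-\tfrac12(\overset{1}{\nabla}_X\overset{1}{T})(Y,Z)+\tfrac12(\overset{1}{\nabla}_Y\overset{1}{T})(X,Z)-\tfrac12\mathfrak S_{XYZ}\overset{1}{T}(\overset{1}{T}(X,Y),Z)+\tfrac12\overset{1}{T}(\overset{1}{T}(Z,X),Y)$. The Ricci tensors are $\overset{\theta}{Ric}(Y,Z)=\mathrm{tr}(X\mapsto \overset{\theta}{R}(X,Y)Z)$,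 $\theta=0,\dots,5$, and $\overset{g}{Ric}$ is the Ricci tensor of $\overset{g}{\nabla}$ defined the same way; $\overset{\theta}{r}$ and $\overset{g}{r}$ are their $g$-traces. Einstein type tensors: $\overset{\theta}{E}=\overset{\theta}{Ric}-\frac{\overset{\theta}{r}}{n}g$ and traceless Ricci tensor $\overset{g}{E}=\overset{g}{Ric}-\frac{\overset{g}{r}}{n}g$. *)

theory Defs
  imports "HOL-Analysis.Analysis"
begin

text \<open>The manifold is an open coordinate domain U of
R^n (n = CARD('n)); tensor fields are given by their components in the coordinate
frame. A connection is given by its coefficients C x k i j, meaning
nabla_{d_i} d_j = sum_k C x k i j d_k at the point x.\<close>

definition pd :: "'n::finite \<Rightarrow> (real^'n \<Rightarrow> real) \<Rightarrow> real^'n \<Rightarrow> real" where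
  "pd i f x = frechet_derivative f (at x) (axis i 1)"

fun pdn :: "'n::finite list \<Rightarrow> (real^'n \<Rightarrow> real) \<Rightarrow> real^'n \<Rightarrow> real" where
  "pdn [] f = f"
| "pdn (i # is) f = pd i (pdn is f)"

definition smooth_on :: "(real^'n::finite) set \<Rightarrow> (real^'n \<Rightarrow> real) \<Rightarrow> bool" where
  "smooth_on U f \<longleftrightarrow> (\<forall>is. \<forall>x\<in>U. pdn is f differentiable (at x))"

definition pseudo_riemannian_on :: "(real^'n::finite) set \<Rightarrow> (real^'n \<Rightarrow> real^'n^'n) \<Rightarrow> bool" where
  "pseudo_riemannian_on U g \<longleftrightarrow> open U \<and>
     (\<forall>a b. smooth_on U (\<lambda>y. g y $ a $ b)) \<and>
     (\<forall>x\<in>U. transpose (g x) = g x \<and> invertible (g x))"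

definition ginv :: "(real^'n::finite \<Rightarrow> real^'n^'n) \<Rightarrow> real^'n \<Rightarrow> 'n \<Rightarrow> 'n \<Rightarrow> real" where
  "ginv g x a b = matrix_inv (g x) $ a $ b"

definition christoffel :: "(real^'n::finite \<Rightarrow> real^'n^'n) \<Rightarrow> real^'n \<Rightarrow> 'n \<Rightarrow> 'n \<Rightarrow> 'n \<Rightarrow> real" where
  "christoffel g x k i j = (1/2) * (\<Sum>l\<in>UNIV. ginv g x k l *
      (pd i (\<lambda>y. g y $ j $ l) x + pd j (\<lambda>y. g y $ i $ l) x - pd l (\<lambda>y. g y $ i $ j) x))"

definition pi_form :: "(real^'n::finite \<Rightarrow> real^'n^'n) \<Rightarrow> (real^'n \<Rightarrow> real^'n) \<Rightarrow> real^'n \<Rightarrow> 'n \<Rightarrow> real" where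
  "pi_form g P x j = (\<Sum>l\<in>UNIV. g x $ j $ l * P x $ l)"

text \<open>Semi-symmetric metric connection: nabla1_X Y = nablag_X Y + pi(Y) X - g(X,Y) P.\<close>
definition ssm_conn :: "(real^'n::finite \<Rightarrow> real^'n^'n) \<Rightarrow> (real^'n \<Rightarrow> real^'n) \<Rightarrow> real^'n \<Rightarrow> 'n \<Rightarrow> 'n \<Rightarrow> 'n \<Rightarrow> real" where
  "ssm_conn g P x k i j = christoffel g x k i j + pi_form g P x j * (if k = i then 1 else 0)
      - g x $ i $ j * P x $ k"

definition cov_pi :: "(real^'n::finite \<Rightarrow> real^'n^'n) \<Rightarrow> (real^'n \<Rightarrow> real^'n) \<Rightarrow> real^'n \<Rightarrow> 'n \<Rightarrow> 'n \<Rightarrow> real" where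
  "cov_pi g P x i j = pd i (\<lambda>y. pi_form g P y j) x - (\<Sum>m\<in>UNIV. christoffel g x m i j * pi_form g P x m)"

definition concircular_ssm :: "(real^'n::finite) set \<Rightarrow> (real^'n \<Rightarrow> real^'n^'n) \<Rightarrow> (real^'n \<Rightarrow> real^'n) \<Rightarrow> (real^'n \<Rightarrow> real) \<Rightarrow> bool" where
  "concircular_ssm U g P \<omega> \<longleftrightarrow> smooth_on U \<omega> \<and>
     (\<forall>x\<in>U. \<forall>i j. cov_pi g P x i j - pi_form g P x i * pi_form g P x j = \<omega> x * g x $ i $ j)"

type_synonym 'n conn = "real^'n \<Rightarrow> 'n \<Rightarrow> 'n \<Rightarrow> 'n \<Rightarrow> real"
type_synonym 'n tens13 = "real^'n \<Rightarrow> 'n \<Rightarrow> 'n \<Rightarrow> 'n \<Rightarrow> 'n \<Rightarrow> real"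

text \<open>Curvature R(d_i,d_j)d_k = sum_l curv C x l i j k d_l, with
R(X,Y)Z = nabla_X nabla_Y Z - nabla_Y nabla_X Z - nabla_[X,Y] Z.\<close>
definition curv :: "'n::finite conn \<Rightarrow> 'n tens13" where
  "curv C x l i j k = pd i (\<lambda>y. C y l j k) x - pd j (\<lambda>y. C y l i k) x
      + (\<Sum>m\<in>UNIV. C x m j k * C x l i m - C x m i k * C x l j m)"

definition tors :: "'n::finite conn \<Rightarrow> 'n conn" where
  "tors C x l i j = C x l i j - C x l j i"

text \<open>(nabla_{d_i} T)(d_j,d_k) = sum_l covd C T x i l j k d_l.\<close>
definition covd :: "'n::finite conn \<Rightarrow> 'n conn \<Rightarrow> 'n tens13" where
  "covd C T x i l j k = pd i (\<lambda>y. T y l j k) x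
     + (\<Sum>m\<in>UNIV. C x l i m * T x m j k - C x m i j * T x l m k - C x m i k * T x l j m)"

text \<open>T(T(d_a,d_b),d_c) = sum_l TT T x l a b c d_l.\<close>
definition TT :: "'n::finite conn \<Rightarrow> 'n tens13" where
  "TT T x l a b c = (\<Sum>m\<in>UNIV. T x m a b * T x l m c)"

definition cycTT :: "'n::finite conn \<Rightarrow> 'n tens13" where
  "cycTT T x l a b c = TT T x l a b c + TT T x l b c a + TT T x l c a b"

definition R0 :: "'n::finite conn \<Rightarrow> 'n tens13" where
  "R0 C x l i j k = curv C x l i j k - 1/2 * covd C (tors C) x i l j k
     + 1/2 * covd C (tors C) x j l i k - 1/4 * cycTT (tors C) x l i j k - 1/4 * TT (tors C) x l i j k"

definition R1 :: "'n::finite conn \<Rightarrow> 'n tens13" where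
  "R1 C = curv C"

definition R2 :: "'n::finite conn \<Rightarrow> 'n tens13" where
  "R2 C x l i j k = curv C x l i j k - covd C (tors C) x i l j k
     + covd C (tors C) x j l i k - cycTT (tors C) x l i j k"

definition R3 :: "'n::finite conn \<Rightarrow> 'n tens13" where
  "R3 C x l i j k = curv C x l i j k + covd C (tors C) x j l i k"

definition R4 :: "'n::finite conn \<Rightarrow> 'n tens13" where
  "R4 C x l i j k = curv C x l i j k + covd C (tors C) x j l i k - TT (tors C) x l i j k"

definition R5 :: "'n::finite conn \<Rightarrow> 'n tens13" where
  "R5 C x l i j k = curv C x l i j k - 1/2 * covd C (tors C) x i l j k
     + 1/2 * covd C (tors C) x j l i k - 1/2 * cycTT (tors C) x l i j k + 1/2 * TT (tors C) x l k i j"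

text \<open>Ricci(d_j,d_k) = trace of X |-> R(X,d_j)d_k.\<close>
definition ricci :: "'n::finite tens13 \<Rightarrow> real^'n \<Rightarrow> 'n \<Rightarrow> 'n \<Rightarrow> real" where
  "ricci R x j k = (\<Sum>i\<in>UNIV. R x i i j k)"

definition scal :: "(real^'n::finite \<Rightarrow> real^'n^'n) \<Rightarrow> (real^'n \<Rightarrow> 'n \<Rightarrow> 'n \<Rightarrow> real) \<Rightarrow> real^'n \<Rightarrow> real" where
  "scal g Ric x = (\<Sum>j\<in>UNIV. \<Sum>k\<in>UNIV. ginv g x j k * Ric x j k)"

definition einstein :: "(real^'n::finite \<Rightarrow> real^'n^'n) \<Rightarrow> 'n tens13 \<Rightarrow> real^'n \<Rightarrow> 'n \<Rightarrow> 'n \<Rightarrow> real" where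
  "einstein g R x j k = ricci R x j k - scal g (ricci R) x / real CARD('n) * g x $ j $ k"

definition LC :: "(real^'n::finite \<Rightarrow> real^'n^'n) \<Rightarrow> 'n conn" where
  "LC g x k i j = christoffel g x k i j"

definition SSM :: "(real^'n::finite \<Rightarrow> real^'n^'n) \<Rightarrow> (real^'n \<Rightarrow> real^'n) \<Rightarrow> 'n conn" where
  "SSM g P x k i j = ssm_conn g P x k i j"

end

theory Submission
  imports Defs
begin


lemma pd_local:
  assumes "open U" "x \<in> U" "\<And>y. y \<in> U \<Longrightarrow> f y = h y"
  shows "pd i f x = pd i h x"
proof -
  have "\<And>D. (f has_derivative D) (at x) \<longleftrightarrow> (h has_derivative D) (at x)"
    using has_derivative_transform_within_open[OF _ assms(1,2)] assms(3) by metis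
  then show ?thesis unfolding pd_def frechet_derivative_def by simp
qed

lemma pd_hd: "(f has_derivative D) (at x) \<Longrightarrow> pd i f x = D (axis i 1)"
  unfolding pd_def using frechet_derivative_at by metis

lemma hd_fd: "f differentiable (at x) \<Longrightarrow> (f has_derivative frechet_derivative f (at x)) (at x)"
  using frechet_derivative_works by blast

lemma pd_add: "f differentiable (at x) \<Longrightarrow> h differentiable (at x) \<Longrightarrow>
   pd i (\<lambda>y. f y + h y) x = pd i f x + pd i h x"
  using pd_hd[OF has_derivative_add[OF hd_fd hd_fd]] by (simp add: pd_def)

lemma pd_diff: "f differentiable (at x) \<Longrightarrow> h differentiable (at x) \<Longrightarrow>
   pd i (\<lambda>y. f y - h y) x = pd i f x - pd i h x"
  using pd_hd[OF has_derivative_diff[OF hd_fd hd_fd]] by (simp add: pd_def)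

lemma pd_mult: "f differentiable (at x) \<Longrightarrow> h differentiable (at x) \<Longrightarrow>
   pd i (\<lambda>y. f y * h y) x = f x * pd i h x + pd i f x * h x"
  using pd_hd[OF has_derivative_mult[OF hd_fd hd_fd]] by (simp add: pd_def)

lemma pd_cmult: "f differentiable (at x) \<Longrightarrow> 
   pd i (\<lambda>y. f y * c) x = pd i f x * c"
  using pd_mult[of f x "\<lambda>_. c" i] by (simp add: pd_def)

lemma pd_sum: "finite S \<Longrightarrow> (\<And>a. a \<in> S \<Longrightarrow> f a differentiable (at x)) \<Longrightarrow>
   pd i (\<lambda>y. \<Sum>a\<in>S. f a y) x = (\<Sum>a\<in>S. pd i (f a) x)"
  using pd_hd[OF has_derivative_sum[OF hd_fd, of S f x]] by (simp add: pd_def)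



lemma inv_props: "invertible (A::real^'n::finite^'n) \<Longrightarrow> A ** matrix_inv A = mat 1 \<and> matrix_inv A ** A = mat 1"
  unfolding invertible_def matrix_inv_def by (rule someI_ex)

lemma ginv_cramer:
  fixes A :: "real^'n::finite^'n"
  assumes "invertible A"
  shows "matrix_inv A $ a $ b = det (\<chi> i j. if j = a then axis b 1 $ i else A$i$j) / det A"
proof -
  have d: "det A \<noteq> 0" using assms invertible_det_nz by blast
  let ?x = "(\<chi> i. matrix_inv A $ i $ b)"
  have "A *v ?x = axis b 1"
  proof -
    have "A *v ?x = (\<chi> i. (A ** matrix_inv A) $ i $ b)"
      by (simp add: vec_eq_iff matrix_vector_mult_def matrix_matrix_mult_def)
    also have "\<dots> = axis b 1"
      using inv_props[OF assms] by (simp add: mat_def axis_def vec_eq_iff)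
    finally show ?thesis .
  qed
  then have eq: "?x = (\<chi> k. det(\<chi> i j. if j=k then axis b (1::real) $ i else A$i$j) / det A)"
    by (rule cramer[OF d, THEN iffD1])
  from arg_cong[OF eq, of "\<lambda>v. v $ a"] show ?thesis unfolding vec_lambda_beta .
qed

lemma differentiable_prod':
  fixes f :: "'i \<Rightarrow> 'a::real_normed_vector \<Rightarrow> real"
  assumes "\<And>i. i \<in> I \<Longrightarrow> f i differentiable (at x)"
  shows "(\<lambda>y. \<Prod>i\<in>I. f i y) differentiable (at x)"
proof -
  have "\<And>i. i \<in> I \<Longrightarrow> (f i has_derivative frechet_derivative (f i) (at x)) (at x)"
    using assms hd_fd by blast
  then have "((\<lambda>y. \<Prod>i\<in>I. f i y) has_derivative (\<lambda>y. \<Sum>i\<in>I. frechet_derivative (f i) (at x) y * (\<Prod>j\<in>I - {i}. f j x))) (at x)"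
    by (rule has_derivative_prod)
  then show ?thesis by (rule differentiableI)
qed

lemma det_differentiable:
  fixes M :: "'m::real_normed_vector \<Rightarrow> real^'n::finite^'n"
  assumes "\<And>i j. (\<lambda>y. M y $ i $ j) differentiable (at x)"
  shows "(\<lambda>y. det (M y)) differentiable (at x)"
  unfolding det_def
  apply (rule differentiable_sum)
   apply simp
  apply (intro ballI differentiable_mult differentiable_const)
  apply (rule differentiable_prod')
  using assms by auto



lemma if1_mult[simp]: "(if P then 1 else 0) * (x::real) = (if P then x else 0)" by simp
lemma mult_if1[simp]: "(x::real) * (if P then 1 else 0) = (if P then x else 0)" by simp
lemma if0_mult[simp]: "(if P then y else 0) * (x::real) = (if P then y * x else 0)" by simp
lemma mult_if0[simp]: "(x::real) * (if P then y else 0) = (if P then x * y else 0)" by simp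

locale alg =
  fixes G Gi :: "'n::finite \<Rightarrow> 'n \<Rightarrow> real"
    and p Q :: "'n \<Rightarrow> real" and \<omega> :: real
  assumes Gsym: "G a b = G b a"
    and GiG: "(\<Sum>b\<in>UNIV. Gi a b * G b c) = (if a = c then 1 else 0)"
    and p_def: "p a = (\<Sum>l\<in>UNIV. G a l * Q l)"
begin

definition "A l j k = p k * (if l = j then 1 else 0) - G j k * Q l"
definition "T l j k = p k * (if l = j then 1 else 0) - p j * (if l = k then 1 else 0)"
definition "N i k = \<omega> * G i k + p i * p k"
definition "D l i = \<omega> * (if l = i then 1 else 0) + p i * Q l"
definition "nA i l j k = N i k * (if l = j then 1 else 0) - G j k * D l i"
definition "nn = real CARD('n)"
definition "pP = (\<Sum>a\<in>UNIV. p a * Q a)"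

lemma GQ: "(\<Sum>m\<in>UNIV. G j m * Q m) = p j" by (simp add: p_def)
lemma GQ': "(\<Sum>m\<in>UNIV. G m j * Q m) = p j" by (simp add: p_def Gsym)
lemma GQ2: "(\<Sum>m\<in>UNIV. Q m * G j m) = p j" by (simp add: p_def mult.commute)
lemma GQ3: "(\<Sum>m\<in>UNIV. Q m * G m j) = p j" by (simp add: p_def Gsym mult.commute)
lemmas GQs = GQ GQ' GQ2 GQ3
lemma pQ: "(\<Sum>m\<in>UNIV. p m * Q m) = pP" by (simp add: pP_def)

lemma sumD: "(\<Sum>i\<in>UNIV. D i i) = nn * \<omega> + pP"
  by (simp add: D_def sum.distrib nn_def pP_def mult.commute)

lemma sumA_ii: "(\<Sum>i\<in>UNIV. A i i m) = (nn - 1) * p m"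
  by (simp add: A_def sum_subtractf nn_def GQs algebra_simps)

lemma S1: "(\<Sum>i\<in>UNIV. nA i i j k) = N j k - G j k * (nn * \<omega> + pP)"
  by (simp add: nA_def sum_subtractf sumD flip: sum_distrib_left)

lemma S2: "(\<Sum>i\<in>UNIV. nA j i i k) = nn * N j k - \<omega> * G j k - p j * p k"
proof -
  have "(\<Sum>i\<in>UNIV. G i k * D i j) = (\<Sum>i\<in>UNIV. \<omega> * (if i = j then G i k else 0) + p j * (Q i * G i k))"
    by (rule sum.cong) (auto simp: D_def algebra_simps)
  also have "\<dots> = \<omega> * G j k + p j * p k"
    by (simp add: sum.distrib GQs flip: sum_distrib_left)
  finally show ?thesis
    by (simp add: nA_def sum_subtractf nn_def)
qed

lemma S3: "(\<Sum>i\<in>UNIV. \<Sum>m\<in>UNIV. A m j k * A i i m) = (nn - 1) * (p j * p k - G j k * pP)"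
proof -
  have "(\<Sum>i\<in>UNIV. \<Sum>m\<in>UNIV. A m j k * A i i m) = (\<Sum>m\<in>UNIV. A m j k * (\<Sum>i\<in>UNIV. A i i m))"
    by (subst sum.swap) (simp add: sum_distrib_left)
  also have "\<dots> = (nn - 1) * (\<Sum>m\<in>UNIV. A m j k * p m)"
    by (simp add: sumA_ii sum_distrib_left algebra_simps)
  also have "(\<Sum>m\<in>UNIV. A m j k * p m) = p j * p k - G j k * pP"
    by (simp add: A_def algebra_simps sum_subtractf pP_def sum_distrib_left)
  finally show ?thesis .
qed

lemma S4: "(\<Sum>i\<in>UNIV. \<Sum>m\<in>UNIV. A m i k * A i j m) = p j * p k - G j k * pP"
proof -
  have inner: "(\<Sum>m\<in>UNIV. A m i k * A i j m) = 
     (if i = j then p k * p i - G i k * pP else 0) - p k * (G j i * Q i) + (G i k * Q i) * p j" for i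
  proof -
    have "(\<Sum>m\<in>UNIV. A m i k * A i j m) = (\<Sum>m\<in>UNIV. (if m = i then (if i = j then p k * p i else 0) - p k * (G j i * Q i) else 0)
       - (if i = j then G i k else 0) * (p m * Q m) + (G i k * Q i) * (G j m * Q m))"
      by (rule sum.cong) (auto simp: A_def algebra_simps)
    also have "\<dots> = (if i = j then p k * p i - G i k * pP else 0) - p k * (G j i * Q i) + (G i k * Q i) * p j"
      by (simp add: sum.distrib sum_subtractf GQ pQ flip: sum_distrib_left)
    finally show ?thesis .
  qed
  have "(\<Sum>i\<in>UNIV. \<Sum>m\<in>UNIV. A m i k * A i j m) = (\<Sum>i\<in>UNIV. (if i = j then p k * p i - G i k * pP else 0) - p k * (G j i * Q i) + (G i k * Q i) * p j)"
    by (simp only: inner)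
  also have "\<dots> = (\<Sum>i\<in>UNIV. (if i = j then p k * p i - G i k * pP else 0) - p k * (G j i * Q i) + p j * (G i k * Q i))"
    by (simp add: mult.commute)
  also have "\<dots> = p j * p k - G j k * pP"
    by (simp add: sum.distrib sum_subtractf GQ GQ' flip: sum_distrib_left)
  finally show ?thesis .
qed

lemma ricA: "(\<Sum>i\<in>UNIV. nA i i j k) - (\<Sum>i\<in>UNIV. nA j i i k)
   + (\<Sum>i\<in>UNIV. \<Sum>m\<in>UNIV. A m j k * A i i m - A m i k * A i j m)
   = - (nn - 1) * (2 * \<omega> + pP) * G j k"
proof -
  have "(\<Sum>i\<in>UNIV. \<Sum>m\<in>UNIV. A m j k * A i i m - A m i k * A i j m) = (\<Sum>i\<in>UNIV. \<Sum>m\<in>UNIV. A m j k * A i i m) - (\<Sum>i\<in>UNIV. \<Sum>m\<in>UNIV. A m i k * A i j m)"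
    by (simp only: sum_subtractf)
  then show ?thesis by (simp only: S1 S2 S3 S4) (simp add: N_def algebra_simps)
qed


lemma sum_if_const: "(\<Sum>m\<in>S. if P then f m else (0::real)) = (if P then (\<Sum>m\<in>S. f m) else 0)" by simp

lemma cQp: "(\<Sum>m\<in>UNIV. c * Q m * p m) = c * pP"
  by (simp add: pP_def sum_distrib_left algebra_simps)
lemma cGQ1: "(\<Sum>m\<in>UNIV. G m j * Q m * c) = p j * c"
  by (simp add: GQ' flip: sum_distrib_right)
lemma cGQ2: "(\<Sum>m\<in>UNIV. G j m * Q m * c) = p j * c"
  by (simp add: GQ flip: sum_distrib_right)

lemmas X = A_def T_def ring_distribs sum.distrib sum_subtractf sum_if_const nn_def cQp cGQ1 cGQ2

lemma a2: "(\<Sum>i\<in>UNIV. \<Sum>m\<in>UNIV. A m i j * T i m k) = (nn - 2) * p j * p k + G j k * pP"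
  apply (simp add: X Gsym[of k j])
  done
lemma a3: "(\<Sum>i\<in>UNIV. \<Sum>m\<in>UNIV. A m i k * T i j m) = (2 - nn) * p j * p k - G j k * pP"
  apply (simp add: X Gsym[of k j])
  done
lemma b1: "(\<Sum>i\<in>UNIV. \<Sum>m\<in>UNIV. A i j m * T m i k) = G j k * pP - p j * p k"
  apply (simp add: X Gsym[of k j])
  done
lemma b2: "(\<Sum>i\<in>UNIV. \<Sum>m\<in>UNIV. A m j i * T i m k) = G j k * pP - p j * p k"
  apply (simp add: X Gsym[of k j])
  done
lemma c1: "(\<Sum>i\<in>UNIV. \<Sum>m\<in>UNIV. T m i j * T i m k) = (nn - 1) * p j * p k"
  apply (simp add: X Gsym[of k j])
  done
lemma c3: "(\<Sum>i\<in>UNIV. \<Sum>m\<in>UNIV. T m k i * T i m j) = (1 - nn) * p j * p k"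
  apply (simp add: X Gsym[of k j])
  done


lemma a1: "(\<Sum>i\<in>UNIV. \<Sum>m\<in>UNIV. A i i m * T m j k) = 0"
  by (simp add: X Gsym[of k j])
lemma b3: "(\<Sum>i\<in>UNIV. \<Sum>m\<in>UNIV. A m j k * T i i m) = (nn - 1) * (p j * p k - G j k * pP)"
  by (simp add: X Gsym[of k j])
lemma c2: "(\<Sum>i\<in>UNIV. \<Sum>m\<in>UNIV. T m j k * T i m i) = 0"
  by (simp add: X Gsym[of k j])
lemma a0: "(\<Sum>i\<in>UNIV. N i k * (if i = j then 1 else 0) - N i j * (if i = k then 1 else 0)) = 0"
  by (simp add: sum_subtractf sum.distrib N_def ring_distribs Gsym[of k j] mult.commute)
lemma b0: "(\<Sum>i\<in>UNIV. N j k * (if i = i then 1 else 0) - N j i * (if i = k then 1 else 0)) = (nn - 1) * N j k"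
  by (simp add: sum_subtractf nn_def algebra_simps)

definition "cT i l j k = N i k * (if l = j then 1 else 0) - N i j * (if l = k then 1 else 0)
   + (\<Sum>m\<in>UNIV. A l i m * T m j k - A m i j * T l m k - A m i k * T l j m)"

lemma ricTa: "(\<Sum>i\<in>UNIV. cT i i j k) = 0"
proof -
  have "(\<Sum>i\<in>UNIV. cT i i j k) = (\<Sum>i\<in>UNIV. N i k * (if i = j then 1 else 0) - N i j * (if i = k then 1 else 0))
     + ((\<Sum>i\<in>UNIV. \<Sum>m\<in>UNIV. A i i m * T m j k) - (\<Sum>i\<in>UNIV. \<Sum>m\<in>UNIV. A m i j * T i m k) - (\<Sum>i\<in>UNIV. \<Sum>m\<in>UNIV. A m i k * T i j m))"
    by (simp only: cT_def sum.distrib sum_subtractf)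
  also have "\<dots> = 0" by (simp only: a0 a1 a2 a3) (simp add: algebra_simps)
  finally show ?thesis .
qed

lemma ricTb: "(\<Sum>i\<in>UNIV. cT j i i k) = (nn - 1) * (\<omega> + pP) * G j k"
proof -
  have "(\<Sum>i\<in>UNIV. cT j i i k) = (\<Sum>i\<in>UNIV. N j k * (if i = i then 1 else 0) - N j i * (if i = k then 1 else 0))
     + ((\<Sum>i\<in>UNIV. \<Sum>m\<in>UNIV. A i j m * T m i k) - (\<Sum>i\<in>UNIV. \<Sum>m\<in>UNIV. A m j i * T i m k) - (\<Sum>i\<in>UNIV. \<Sum>m\<in>UNIV. A m j k * T i i m))"
    by (simp only: cT_def sum.distrib sum_subtractf)
  also have "\<dots> = (nn - 1) * (\<omega> + pP) * G j k" by (simp only: b0 b1 b2 b3) (simp add: N_def algebra_simps)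
  finally show ?thesis .
qed

definition "TT' a b c l = (\<Sum>m\<in>UNIV. T m a b * T l m c)"

lemma ricTT1: "(\<Sum>i\<in>UNIV. TT' i j k i) = (nn - 1) * p j * p k"
  unfolding TT'_def by (rule c1)
lemma ricTT2: "(\<Sum>i\<in>UNIV. TT' j k i i) = 0"
  unfolding TT'_def by (rule c2)
lemma ricTT3: "(\<Sum>i\<in>UNIV. TT' k i j i) = (1 - nn) * p j * p k"
  unfolding TT'_def by (rule c3)

lemma scal1: "(\<Sum>j\<in>UNIV. \<Sum>k\<in>UNIV. Gi j k * G j k) = nn"
proof -
  have "(\<Sum>j\<in>UNIV. \<Sum>k\<in>UNIV. Gi j k * G j k) = (\<Sum>j\<in>UNIV. \<Sum>k\<in>UNIV. Gi j k * G k j)"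
    by (simp add: Gsym)
  also have "\<dots> = nn" by (simp add: GiG nn_def)
  finally show ?thesis .
qed

lemma Gip: "(\<Sum>k\<in>UNIV. Gi j k * p k) = Q j"
proof -
  have "(\<Sum>k\<in>UNIV. Gi j k * p k) = (\<Sum>k\<in>UNIV. \<Sum>l\<in>UNIV. Gi j k * G k l * Q l)"
    by (simp add: p_def sum_distrib_left mult.assoc)
  also have "\<dots> = (\<Sum>l\<in>UNIV. (\<Sum>k\<in>UNIV. Gi j k * G k l) * Q l)"
    by (subst sum.swap) (simp add: sum_distrib_right)
  also have "\<dots> = Q j" by (simp add: GiG)
  finally show ?thesis .
qed

lemma scal2: "(\<Sum>j\<in>UNIV. \<Sum>k\<in>UNIV. Gi j k * (p j * p k)) = pP"
proof -
  have "(\<Sum>j\<in>UNIV. \<Sum>k\<in>UNIV. Gi j k * (p j * p k)) = (\<Sum>j\<in>UNIV. p j * (\<Sum>k\<in>UNIV. Gi j k * p k))"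
    by (simp add: sum_distrib_left algebra_simps)
  also have "\<dots> = pP" by (simp add: Gip pP_def)
  finally show ?thesis .
qed

lemma raise:
  assumes "\<And>k. (\<Sum>l\<in>UNIV. G k l * E l) = N i k"
  shows "E l = D l i"
proof -
  have "E l = (\<Sum>a\<in>UNIV. (\<Sum>k\<in>UNIV. Gi l k * G k a) * E a)" by (simp add: GiG)
  also have "\<dots> = (\<Sum>k\<in>UNIV. Gi l k * (\<Sum>a\<in>UNIV. G k a * E a))"
    by (simp add: sum_distrib_left sum_distrib_right mult.assoc) (rule sum.swap)
  also have "\<dots> = (\<Sum>k\<in>UNIV. Gi l k * N i k)" by (simp add: assms)
  also have "\<dots> = \<omega> * (\<Sum>k\<in>UNIV. Gi l k * G k i) + p i * (\<Sum>k\<in>UNIV. Gi l k * p k)"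
    by (simp add: N_def algebra_simps sum.distrib sum_distrib_left Gsym[of i])
  also have "\<dots> = D l i" by (simp add: GiG Gip D_def)
  finally show ?thesis .
qed

end

locale alg2 = alg G Gi p Q \<omega> for G Gi :: "'n::finite \<Rightarrow> 'n \<Rightarrow> real" and p Q \<omega> +
  fixes \<Gamma> :: "'n \<Rightarrow> 'n \<Rightarrow> 'n \<Rightarrow> real"
  assumes \<Gamma>sym: "\<Gamma> k i j = \<Gamma> k j i"
begin

lemma L1:
  assumes "dpik = N i k + (\<Sum>m\<in>UNIV. \<Gamma> m i k * p m)"
    and "dQil = D l i - (\<Sum>m\<in>UNIV. \<Gamma> l i m * Q m)"
    and "dGijk = (\<Sum>m\<in>UNIV. G k m * \<Gamma> m i j + G j m * \<Gamma> m i k)"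
  shows "dpik * (if l = j then 1 else 0) - (G j k * dQil + dGijk * Q l)
    = nA i l j k - (\<Sum>m\<in>UNIV. \<Gamma> l i m * A m j k - \<Gamma> m i j * A l m k - \<Gamma> m i k * A l j m)"
  unfolding assms by (simp add: nA_def X Gsym[of _ k] sum_distrib_left sum_distrib_right algebra_simps)

lemma curv_dec:
  "(dGa + (nA i l j k - (\<Sum>m\<in>UNIV. \<Gamma> l i m * A m j k - \<Gamma> m i j * A l m k - \<Gamma> m i k * A l j m)))
   - (dGb + (nA j l i k - (\<Sum>m\<in>UNIV. \<Gamma> l j m * A m i k - \<Gamma> m j i * A l m k - \<Gamma> m j k * A l i m)))
   + (\<Sum>m\<in>UNIV. (\<Gamma> m j k + A m j k) * (\<Gamma> l i m + A l i m) - (\<Gamma> m i k + A m i k) * (\<Gamma> l j m + A l j m))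
  = (dGa - dGb + (\<Sum>m\<in>UNIV. \<Gamma> m j k * \<Gamma> l i m - \<Gamma> m i k * \<Gamma> l j m))
    + nA i l j k - nA j l i k + (\<Sum>m\<in>UNIV. A m j k * A l i m - A m i k * A l j m)"
  by (simp add: ring_distribs sum.distrib sum_subtractf \<Gamma>sym[of _ j i] algebra_simps)

lemma covd_dec:
  assumes "dpik = N i k + (\<Sum>m\<in>UNIV. \<Gamma> m i k * p m)"
    and "dpij = N i j + (\<Sum>m\<in>UNIV. \<Gamma> m i j * p m)"
  shows "(dpik * (if l = j then 1 else 0) - dpij * (if l = k then 1 else 0))
     + (\<Sum>m\<in>UNIV. (\<Gamma> l i m + A l i m) * T m j k - (\<Gamma> m i j + A m i j) * T l m k - (\<Gamma> m i k + A m i k) * T l j m)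
     = cT i l j k"
  unfolding assms by (simp add: cT_def X sum_distrib_left sum_distrib_right algebra_simps)

end


lemma diff_transform:
  assumes "open U" "x \<in> U" "\<And>y. y \<in> U \<Longrightarrow> f y = h y" "h differentiable (at x)"
  shows "f differentiable (at x)"
  using assms has_derivative_transform_within_open[OF _ assms(1,2)] unfolding differentiable_def
  by metis

lemma einstein_shift:
  fixes g :: "real^'n::finite \<Rightarrow> real^'n^'n"
  assumes "\<And>j k. ricci R x j k = ricci R' x j k + a * g x $ j $ k + b * (pp j * pp k)"
    and "(\<Sum>j\<in>UNIV. \<Sum>k\<in>UNIV. ginv g x j k * g x $ j $ k) = real CARD('n)"
    and "(\<Sum>j\<in>UNIV. \<Sum>k\<in>UNIV. ginv g x j k * (pp j * pp k)) = s"
  shows "einstein g R x j k = einstein g R' x j k + b * (pp j * pp k) - b * s / real CARD('n) * g x $ j $ k"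
proof -
  have "scal g (ricci R) x = scal g (ricci R') x + a * real CARD('n) + b * s"
    unfolding scal_def assms(1)
    by (simp add: algebra_simps sum.distrib sum_distrib_left flip: assms(2,3))
  moreover have "real CARD('n) \<noteq> 0" by simp
  ultimately show ?thesis unfolding einstein_def assms(1)
    by (simp add: field_simps)
qed

theorem mainTheorem5:
  fixes U :: "(real^'n::finite) set"
    and g :: "real^'n \<Rightarrow> real^'n^'n"
    and P :: "real^'n \<Rightarrow> real^'n"
    and \<omega> :: "real^'n \<Rightarrow> real"
  assumes "pseudo_riemannian_on U g"
    and "\<forall>a. smooth_on U (\<lambda>y. P y $ a)"
    and "concircular_ssm U g P \<omega>"
    and "x \<in> U"
  defines "n \<equiv> real CARD('n)"
    and "Eg \<equiv> einstein g (curv (LC g))"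
    and "C \<equiv> SSM g P"
    and "\<pi>P \<equiv> (\<Sum>a\<in>UNIV. pi_form g P x a * P x $ a)"
  shows "\<forall>j k.
      einstein g (R0 C) x j k = Eg x j k + (n - 1) / (4 * n) * \<pi>P * g x $ j $ k
                                   - (n - 1) / 4 * pi_form g P x j * pi_form g P x k
    \<and> einstein g (R1 C) x j k = Eg x j k
    \<and> einstein g (R2 C) x j k = Eg x j k
    \<and> einstein g (R3 C) x j k = Eg x j k
    \<and> einstein g (R4 C) x j k = Eg x j k + (n - 1) / n * \<pi>P * g x $ j $ k
                                   - (n - 1) * pi_form g P x j * pi_form g P x k
    \<and> einstein g (R5 C) x j k = Eg x j k + (n - 1) / (2 * n) * \<pi>P * g x $ j $ k
                                   - (n - 1) / 2 * pi_form g P x j * pi_form g P x k"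
proof -
  have openU: "open U" and gsm: "\<And>a b. smooth_on U (\<lambda>y. g y $ a $ b)"
    and gtr: "\<And>y. y \<in> U \<Longrightarrow> transpose (g y) = g y" and ginvU: "\<And>y. y \<in> U \<Longrightarrow> invertible (g y)"
    using assms(1) unfolding pseudo_riemannian_on_def by auto
  have xU: "x \<in> U" by fact
  have gsym: "\<And>y a b. y \<in> U \<Longrightarrow> g y $ a $ b = g y $ b $ a"
  proof -
    fix y a b assume "y \<in> U"
    have "transpose (g y) $ a $ b = g y $ b $ a" by (simp add: transpose_def)
    then show "g y $ a $ b = g y $ b $ a" using gtr[OF \<open>y \<in> U\<close>] by simp
  qed
  have g_diff: "\<And>a b y. y \<in> U \<Longrightarrow> (\<lambda>y. g y $ a $ b) differentiable (at y)"
    using gsm unfolding smooth_on_def by (metis pdn.simps(1))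
  have dg_diff: "\<And>a b c y. y \<in> U \<Longrightarrow> (\<lambda>z. pd c (\<lambda>y. g y $ a $ b) z) differentiable (at y)"
    using gsm unfolding smooth_on_def by (metis pdn.simps)
  have P_diff: "\<And>a y. y \<in> U \<Longrightarrow> (\<lambda>y. P y $ a) differentiable (at y)"
    using assms(2) unfolding smooth_on_def by (metis pdn.simps(1))
  have pi_diff: "\<And>j y. y \<in> U \<Longrightarrow> (\<lambda>y. pi_form g P y j) differentiable (at y)"
    unfolding pi_form_def by (rule differentiable_sum) (simp_all add: g_diff P_diff)
  have ginv_diff: "\<And>a b. (\<lambda>y. ginv g y a b) differentiable (at x)"
  proof -
    fix a b
    show "(\<lambda>y. ginv g y a b) differentiable (at x)"
    proof (rule diff_transform[OF openU xU])
      show "\<And>y. y \<in> U \<Longrightarrow> ginv g y a b = det (\<chi> i j. if j = a then axis b 1 $ i else g y $ i $ j) / det (g y)"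
        unfolding ginv_def using ginvU ginv_cramer by blast
      have "(\<lambda>y. det (\<chi> i j. if j = a then axis b 1 $ i else g y $ i $ j)) differentiable (at x)"
      proof (rule det_differentiable)
        fix i j
        show "(\<lambda>y. (\<chi> i j. if j = a then axis b 1 $ i else g y $ i $ j) $ i $ j) differentiable (at x)"
          by (cases "j = a") (simp_all add: g_diff[OF xU])
      qed
      moreover have "(\<lambda>y. det (g y)) differentiable (at x)"
        by (rule det_differentiable) (auto intro: g_diff[OF xU])
      moreover have "det (g x) \<noteq> 0" using ginvU[OF xU] invertible_det_nz by blast
      ultimately show "(\<lambda>y. det (\<chi> i j. if j = a then axis b 1 $ i else g y $ i $ j) / det (g y)) differentiable (at x)"
        by (rule differentiable_divide)
    qed
  qed
  have chr_diff: "\<And>k i j. (\<lambda>y. christoffel g y k i j) differentiable (at x)"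
  proof -
    fix k i j
    have "\<And>l. (\<lambda>y. ginv g y k l * (pd i (\<lambda>y. g y $ j $ l) y + pd j (\<lambda>y. g y $ i $ l) y - pd l (\<lambda>y. g y $ i $ j) y)) differentiable (at x)"
      by (intro differentiable_mult ginv_diff differentiable_add differentiable_diff dg_diff[OF xU])
    then have "(\<lambda>y. \<Sum>l\<in>UNIV. ginv g y k l * (pd i (\<lambda>y. g y $ j $ l) y + pd j (\<lambda>y. g y $ i $ l) y - pd l (\<lambda>y. g y $ i $ j) y)) differentiable (at x)"
      by (intro differentiable_sum) auto
    then show "(\<lambda>y. christoffel g y k i j) differentiable (at x)"
      unfolding christoffel_def by (intro differentiable_mult differentiable_const)
  qed
  have dGsym: "\<And>y a b c. y \<in> U \<Longrightarrow> pd c (\<lambda>y. g y $ a $ b) y = pd c (\<lambda>y. g y $ b $ a) y"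
    by (rule pd_local[OF openU]) (auto intro: gsym)
  have chrsym: "\<And>y k i j. y \<in> U \<Longrightarrow> christoffel g y k i j = christoffel g y k j i"
  proof -
    fix y k i j assume yU: "y \<in> U"
    have "\<And>l. pd l (\<lambda>y. g y $ i $ j) y = pd l (\<lambda>y. g y $ j $ i) y" using dGsym[OF yU] by blast
    then show "christoffel g y k i j = christoffel g y k j i"
      unfolding christoffel_def by (simp add: algebra_simps)
  qed
  have GiG: "\<And>a c. (\<Sum>b\<in>UNIV. ginv g x a b * g x $ b $ c) = (if a = c then 1 else 0)"
  proof -
    fix a c
    have "(matrix_inv (g x) ** g x) $ a $ c = mat 1 $ a $ c" using inv_props[OF ginvU[OF xU]] by simp
    then show "(\<Sum>b\<in>UNIV. ginv g x a b * g x $ b $ c) = (if a = c then 1 else 0)"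
      by (simp add: matrix_matrix_mult_def mat_def ginv_def)
  qed
  have GGi: "\<And>a c. (\<Sum>b\<in>UNIV. g x $ a $ b * ginv g x b c) = (if a = c then 1 else 0)"
  proof -
    fix a c
    have "(g x ** matrix_inv (g x)) $ a $ c = mat 1 $ a $ c" using inv_props[OF ginvU[OF xU]] by simp
    then show "(\<Sum>b\<in>UNIV. g x $ a $ b * ginv g x b c) = (if a = c then 1 else 0)"
      by (simp add: matrix_matrix_mult_def mat_def ginv_def)
  qed
  interpret I: alg2 "\<lambda>a b. g x $ a $ b" "\<lambda>a b. ginv g x a b" "\<lambda>j. pi_form g P x j" "\<lambda>a. P x $ a" "\<omega> x"
     "\<lambda>k i j. christoffel g x k i j"
    apply unfold_locales
    using gsym[OF xU] GiG chrsym[OF xU] by (auto simp: pi_form_def)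
  define dG where "dG c a b = pd c (\<lambda>y. g y $ a $ b) x" for c a b
  define dQ where "dQ c a = pd c (\<lambda>y. P y $ a) x" for c a
  define dp where "dp c j = pd c (\<lambda>y. pi_form g P y j) x" for c j
  define \<Gamma> where "\<Gamma> = christoffel g x"
  define G where "G a b = g x $ a $ b" for a b
  define p where "p = pi_form g P x"
  define Q where "Q a = P x $ a" for a
  have dGs: "\<And>c a b. dG c a b = dG c b a" unfolding dG_def using dGsym[OF xU] by blast
  have LCx: "\<And>l i j. (\<Sum>m\<in>UNIV. G l m * \<Gamma> m i j) = 1/2 * (dG i j l + dG j i l - dG l i j)"
  proof -
    fix l i j
    have "(\<Sum>m\<in>UNIV. G l m * \<Gamma> m i j) = 1/2 * (\<Sum>m\<in>UNIV. \<Sum>a\<in>UNIV. G l m * ginv g x m a * (dG i j a + dG j i a - dG a i j))"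
      unfolding \<Gamma>_def christoffel_def dG_def by (simp add: sum_distrib_left mult.assoc)
    also have "\<dots> = 1/2 * (\<Sum>a\<in>UNIV. (\<Sum>m\<in>UNIV. G l m * ginv g x m a) * (dG i j a + dG j i a - dG a i j))"
      by (subst sum.swap) (simp add: sum_distrib_right)
    also have "\<dots> = 1/2 * (dG i j l + dG j i l - dG l i j)"
      by (simp add: G_def GGi)
    finally show "(\<Sum>m\<in>UNIV. G l m * \<Gamma> m i j) = 1/2 * (dG i j l + dG j i l - dG l i j)" .
  qed
  have compat: "\<And>i j k. dG i j k = (\<Sum>m\<in>UNIV. G k m * \<Gamma> m i j + G j m * \<Gamma> m i k)"
  proof -
    fix i j k
    have "(\<Sum>m\<in>UNIV. G k m * \<Gamma> m i j + G j m * \<Gamma> m i k) = 1/2 * (dG i j k + dG j i k - dG k i j) + 1/2 * (dG i k j + dG k i j - dG j i k)"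
      by (simp add: sum.distrib LCx)
    also have "\<dots> = dG i j k" using dGs[of i k j] by (simp add: field_simps)
    finally show "dG i j k = (\<Sum>m\<in>UNIV. G k m * \<Gamma> m i j + G j m * \<Gamma> m i k)" by simp
  qed
  have dp_prod: "\<And>i k. dp i k = (\<Sum>l\<in>UNIV. G k l * dQ i l + dG i k l * Q l)"
  proof -
    fix i k
    have "dp i k = (\<Sum>l\<in>UNIV. pd i (\<lambda>y. g y $ k $ l * P y $ l) x)"
      unfolding dp_def pi_form_def
      by (rule pd_sum) (auto intro!: differentiable_mult g_diff P_diff xU)
    also have "\<dots> = (\<Sum>l\<in>UNIV. G k l * dQ i l + dG i k l * Q l)"
      by (rule sum.cong) (auto simp: pd_mult g_diff P_diff xU G_def dQ_def dG_def Q_def)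
    finally show "dp i k = (\<Sum>l\<in>UNIV. G k l * dQ i l + dG i k l * Q l)" .
  qed
  have dp_eq: "\<And>i k. dp i k = I.N i k + (\<Sum>m\<in>UNIV. \<Gamma> m i k * p m)"
  proof -
    fix i k
    have "cov_pi g P x i k - pi_form g P x i * pi_form g P x k = \<omega> x * g x $ i $ k"
      using assms(3) xU unfolding concircular_ssm_def by blast
    then show "dp i k = I.N i k + (\<Sum>m\<in>UNIV. \<Gamma> m i k * p m)"
      unfolding cov_pi_def I.N_def dp_def \<Gamma>_def p_def by simp
  qed
  have dQ_eq: "\<And>i l. dQ i l = I.D l i - (\<Sum>m\<in>UNIV. \<Gamma> l i m * Q m)"
  proof -
    fix i l
    have key: "(\<Sum>l\<in>UNIV. g x $ k $ l * (dQ i l + (\<Sum>m\<in>UNIV. \<Gamma> l i m * Q m))) = I.N i k" for k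
    proof -
      have s1: "(\<Sum>l\<in>UNIV. dG i k l * Q l) = (\<Sum>m\<in>UNIV. p m * \<Gamma> m i k) + (\<Sum>l\<in>UNIV. \<Sum>m\<in>UNIV. G k l * \<Gamma> l i m * Q m)"
      proof -
        have "(\<Sum>l\<in>UNIV. dG i k l * Q l) = (\<Sum>l\<in>UNIV. \<Sum>m\<in>UNIV. G l m * Q l * \<Gamma> m i k) + (\<Sum>l\<in>UNIV. \<Sum>m\<in>UNIV. G k m * \<Gamma> m i l * Q l)"
          by (simp add: compat sum_distrib_right sum_distrib_left sum.distrib algebra_simps)
        also have "(\<Sum>l\<in>UNIV. \<Sum>m\<in>UNIV. G l m * Q l * \<Gamma> m i k) = (\<Sum>m\<in>UNIV. p m * \<Gamma> m i k)"
          apply (subst sum.swap)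
          apply (simp add: p_def pi_form_def G_def Q_def sum_distrib_right gsym[OF xU])
          done
        also have "(\<Sum>l\<in>UNIV. \<Sum>m\<in>UNIV. G k m * \<Gamma> m i l * Q l) = (\<Sum>l\<in>UNIV. \<Sum>m\<in>UNIV. G k l * \<Gamma> l i m * Q m)"
          by (rule sum.swap)
        finally show ?thesis .
      qed
      have "(\<Sum>l\<in>UNIV. g x $ k $ l * (dQ i l + (\<Sum>m\<in>UNIV. \<Gamma> l i m * Q m)))
          = (\<Sum>l\<in>UNIV. G k l * dQ i l) + (\<Sum>l\<in>UNIV. \<Sum>m\<in>UNIV. G k l * \<Gamma> l i m * Q m)"
        by (simp add: G_def sum.distrib ring_distribs sum_distrib_left mult.assoc)
      also have "\<dots> = dp i k - (\<Sum>m\<in>UNIV. p m * \<Gamma> m i k)"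
        using dp_prod[of i k] s1 by (simp add: sum.distrib)
      also have "\<dots> = I.N i k" by (simp add: dp_eq mult.commute)
      finally show ?thesis .
    qed
    have "dQ i l + (\<Sum>m\<in>UNIV. \<Gamma> l i m * Q m) = I.D l i"
      by (rule I.raise) (use key in \<open>simp add: \<Gamma>_def Q_def\<close>)
    then show "dQ i l = I.D l i - (\<Sum>m\<in>UNIV. \<Gamma> l i m * Q m)" by simp
  qed
  have C_x: "\<And>l j k. C x l j k = \<Gamma> l j k + I.A l j k"
    unfolding C_def SSM_def ssm_conn_def I.A_def \<Gamma>_def by simp
  have C_fun: "\<And>l j k. (\<lambda>y. C y l j k) = (\<lambda>y. (christoffel g y l j k + pi_form g P y k * (if l = j then 1 else 0)) - g y $ j $ k * P y $ l)"
    unfolding C_def SSM_def ssm_conn_def by simp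
  have dC: "\<And>i l j k. pd i (\<lambda>y. C y l j k) x = pd i (\<lambda>y. christoffel g y l j k) x
        + (dp i k * (if l = j then 1 else 0) - (G j k * dQ i l + dG i j k * Q l))"
  proof -
    fix i l j k
    have d1: "(\<lambda>y. christoffel g y l j k + pi_form g P y k * (if l = j then 1 else 0)) differentiable (at x)"
      by (intro differentiable_add differentiable_mult chr_diff pi_diff xU differentiable_const)
    have d2: "(\<lambda>y. g y $ j $ k * P y $ l) differentiable (at x)"
      by (intro differentiable_mult g_diff P_diff xU)
    have "pd i (\<lambda>y. C y l j k) x = pd i (\<lambda>y. christoffel g y l j k + pi_form g P y k * (if l = j then 1 else 0)) x
         - pd i (\<lambda>y. g y $ j $ k * P y $ l) x"
      unfolding C_fun by (rule pd_diff[OF d1 d2])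
    also have "pd i (\<lambda>y. christoffel g y l j k + pi_form g P y k * (if l = j then 1 else 0)) x
       = pd i (\<lambda>y. christoffel g y l j k) x + dp i k * (if l = j then 1 else 0)"
      unfolding dp_def
      by (simp only: pd_add[OF chr_diff differentiable_mult[OF pi_diff[OF xU] differentiable_const]] pd_cmult[OF pi_diff[OF xU]])
    also have "pd i (\<lambda>y. g y $ j $ k * P y $ l) x = G j k * dQ i l + dG i j k * Q l"
      unfolding G_def dQ_def dG_def Q_def by (rule pd_mult) (auto intro: g_diff P_diff xU)
    finally show "pd i (\<lambda>y. C y l j k) x = pd i (\<lambda>y. christoffel g y l j k) x
        + (dp i k * (if l = j then 1 else 0) - (G j k * dQ i l + dG i j k * Q l))" by simp
  qed
  have L1x: "\<And>i l j k. dp i k * (if l = j then 1 else 0) - (G j k * dQ i l + dG i j k * Q l)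
    = I.nA i l j k - (\<Sum>m\<in>UNIV. \<Gamma> l i m * I.A m j k - \<Gamma> m i j * I.A l m k - \<Gamma> m i k * I.A l j m)"
    unfolding G_def Q_def \<Gamma>_def
    by (rule I.L1) (simp_all add: dp_eq dQ_eq compat G_def Q_def \<Gamma>_def p_def)
  have curvC: "\<And>l i j k. curv C x l i j k = curv (LC g) x l i j k + I.nA i l j k - I.nA j l i k
       + (\<Sum>m\<in>UNIV. I.A m j k * I.A l i m - I.A m i k * I.A l j m)"
  proof -
    fix l i j k
    have "curv C x l i j k = (pd i (\<lambda>y. christoffel g y l j k) x + (I.nA i l j k - (\<Sum>m\<in>UNIV. \<Gamma> l i m * I.A m j k - \<Gamma> m i j * I.A l m k - \<Gamma> m i k * I.A l j m)))
      - (pd j (\<lambda>y. christoffel g y l i k) x + (I.nA j l i k - (\<Sum>m\<in>UNIV. \<Gamma> l j m * I.A m i k - \<Gamma> m j i * I.A l m k - \<Gamma> m j k * I.A l i m)))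
      + (\<Sum>m\<in>UNIV. (\<Gamma> m j k + I.A m j k) * (\<Gamma> l i m + I.A l i m) - (\<Gamma> m i k + I.A m i k) * (\<Gamma> l j m + I.A l j m))"
      unfolding curv_def dC L1x C_x by simp
    also have "\<dots> = (pd i (\<lambda>y. christoffel g y l j k) x - pd j (\<lambda>y. christoffel g y l i k) x
         + (\<Sum>m\<in>UNIV. \<Gamma> m j k * \<Gamma> l i m - \<Gamma> m i k * \<Gamma> l j m))
       + I.nA i l j k - I.nA j l i k + (\<Sum>m\<in>UNIV. I.A m j k * I.A l i m - I.A m i k * I.A l j m)"
      unfolding \<Gamma>_def by (rule I.curv_dec)
    also have "pd i (\<lambda>y. christoffel g y l j k) x - pd j (\<lambda>y. christoffel g y l i k) x
         + (\<Sum>m\<in>UNIV. \<Gamma> m j k * \<Gamma> l i m - \<Gamma> m i k * \<Gamma> l j m) = curv (LC g) x l i j k"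
      unfolding curv_def LC_def \<Gamma>_def by simp
    finally show "curv C x l i j k = curv (LC g) x l i j k + I.nA i l j k - I.nA j l i k
       + (\<Sum>m\<in>UNIV. I.A m j k * I.A l i m - I.A m i k * I.A l j m)" .
  qed
  have torsU: "\<And>y l j k. y \<in> U \<Longrightarrow> tors C y l j k = pi_form g P y k * (if l = j then 1 else 0) - pi_form g P y j * (if l = k then 1 else 0)"
  proof -
    fix y l j k assume yU: "y \<in> U"
    show "tors C y l j k = pi_form g P y k * (if l = j then 1 else 0) - pi_form g P y j * (if l = k then 1 else 0)"
      unfolding tors_def C_def SSM_def ssm_conn_def using chrsym[OF yU, of l j k] gsym[OF yU, of j k] by simp
  qed
  have tors_x: "\<And>l j k. tors C x l j k = I.T l j k"
    unfolding I.T_def using torsU[OF xU] by simp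
  have dT: "\<And>i l j k. pd i (\<lambda>y. tors C y l j k) x = dp i k * (if l = j then 1 else 0) - dp i j * (if l = k then 1 else 0)"
  proof -
    fix i l j k
    have "pd i (\<lambda>y. tors C y l j k) x = pd i (\<lambda>y. pi_form g P y k * (if l = j then 1 else 0) - pi_form g P y j * (if l = k then 1 else 0)) x"
      by (rule pd_local[OF openU xU]) (rule torsU)
    also have "\<dots> = dp i k * (if l = j then 1 else 0) - dp i j * (if l = k then 1 else 0)"
      unfolding dp_def
      by (simp only: pd_diff[OF differentiable_mult[OF pi_diff[OF xU] differentiable_const] differentiable_mult[OF pi_diff[OF xU] differentiable_const]] pd_cmult[OF pi_diff[OF xU]])
    finally show "pd i (\<lambda>y. tors C y l j k) x = dp i k * (if l = j then 1 else 0) - dp i j * (if l = k then 1 else 0)" .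
  qed
  have covdC: "\<And>i l j k. covd C (tors C) x i l j k = I.cT i l j k"
  proof -
    fix i l j k
    have "covd C (tors C) x i l j k = (dp i k * (if l = j then 1 else 0) - dp i j * (if l = k then 1 else 0))
     + (\<Sum>m\<in>UNIV. (\<Gamma> l i m + I.A l i m) * I.T m j k - (\<Gamma> m i j + I.A m i j) * I.T l m k - (\<Gamma> m i k + I.A m i k) * I.T l j m)"
      unfolding covd_def dT tors_x C_x by simp
    also have "\<dots> = I.cT i l j k"
      unfolding \<Gamma>_def by (rule I.covd_dec) (simp_all add: dp_eq \<Gamma>_def p_def)
    finally show "covd C (tors C) x i l j k = I.cT i l j k" .
  qed
  have TTx: "\<And>l a b c. TT (tors C) x l a b c = I.TT' a b c l"
    unfolding TT_def I.TT'_def tors_x by simp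
  have S_curv: "\<And>j k. (\<Sum>i\<in>UNIV. curv C x i i j k) = ricci (curv (LC g)) x j k - (I.nn - 1) * (2 * \<omega> x + I.pP) * g x $ j $ k"
  proof -
    fix j k
    have "(\<Sum>i\<in>UNIV. curv C x i i j k) = ricci (curv (LC g)) x j k + ((\<Sum>i\<in>UNIV. I.nA i i j k) - (\<Sum>i\<in>UNIV. I.nA j i i k)
       + (\<Sum>i\<in>UNIV. \<Sum>m\<in>UNIV. I.A m j k * I.A i i m - I.A m i k * I.A i j m))"
      unfolding curvC ricci_def by (simp only: sum.distrib sum_subtractf)
    then show "(\<Sum>i\<in>UNIV. curv C x i i j k) = ricci (curv (LC g)) x j k - (I.nn - 1) * (2 * \<omega> x + I.pP) * g x $ j $ k"
      by (simp only: I.ricA)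
  qed
  have S_a: "\<And>j k. (\<Sum>i\<in>UNIV. covd C (tors C) x i i j k) = 0"
    unfolding covdC by (rule I.ricTa)
  have S_b: "\<And>j k. (\<Sum>i\<in>UNIV. covd C (tors C) x j i i k) = (I.nn - 1) * (\<omega> x + I.pP) * g x $ j $ k"
    unfolding covdC by (rule I.ricTb)
  have S_TT: "\<And>j k. (\<Sum>i\<in>UNIV. TT (tors C) x i i j k) = (I.nn - 1) * pi_form g P x j * pi_form g P x k"
    unfolding TTx by (rule I.ricTT1)
  have S_TT5: "\<And>j k. (\<Sum>i\<in>UNIV. TT (tors C) x i k i j) = (1 - I.nn) * pi_form g P x j * pi_form g P x k"
    unfolding TTx by (rule I.ricTT3)
  have S_cyc: "\<And>j k. (\<Sum>i\<in>UNIV. cycTT (tors C) x i i j k) = 0"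
    unfolding cycTT_def TTx by (simp add: sum.distrib I.ricTT1 I.ricTT2 I.ricTT3 algebra_simps)
  have sc1: "(\<Sum>j\<in>UNIV. \<Sum>k\<in>UNIV. ginv g x j k * g x $ j $ k) = real CARD('n)"
    using I.scal1 unfolding I.nn_def .
  have sc2: "(\<Sum>j\<in>UNIV. \<Sum>k\<in>UNIV. ginv g x j k * (pi_form g P x j * pi_form g P x k)) = \<pi>P"
    using I.scal2 unfolding I.pP_def \<pi>P_def .
  have shift: "\<And>R a b j k. (\<And>j k. ricci R x j k = ricci (curv (LC g)) x j k + a * g x $ j $ k + b * (pi_form g P x j * pi_form g P x k))
     \<Longrightarrow> einstein g R x j k = Eg x j k + b * (pi_form g P x j * pi_form g P x k) - b * \<pi>P / n * g x $ j $ k"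
    unfolding Eg_def n_def by (rule einstein_shift[OF _ sc1 sc2])
  have nn: "I.nn = n" unfolding I.nn_def n_def ..
  have pP: "I.pP = \<pi>P" unfolding I.pP_def \<pi>P_def ..
  have r0: "\<And>j k. ricci (R0 C) x j k = ricci (curv (LC g)) x j k + (- (n - 1) * (2 * \<omega> x + \<pi>P) + 1/2 * ((n - 1) * (\<omega> x + \<pi>P))) * g x $ j $ k
      + (- (n - 1) / 4) * (pi_form g P x j * pi_form g P x k)"
  proof -
    fix j k
    have "ricci (R0 C) x j k = (\<Sum>i\<in>UNIV. curv C x i i j k) - 1/2 * (\<Sum>i\<in>UNIV. covd C (tors C) x i i j k)
      + 1/2 * (\<Sum>i\<in>UNIV. covd C (tors C) x j i i k) - 1/4 * (\<Sum>i\<in>UNIV. cycTT (tors C) x i i j k) - 1/4 * (\<Sum>i\<in>UNIV. TT (tors C) x i i j k)"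
      unfolding ricci_def R0_def by (simp only: sum.distrib sum_subtractf sum_distrib_left)
    then show "?thesis j k" unfolding S_curv S_a S_b S_cyc S_TT nn pP by (simp add: field_simps)
  qed
  have r1: "\<And>j k. ricci (R1 C) x j k = ricci (curv (LC g)) x j k + (- (n - 1) * (2 * \<omega> x + \<pi>P)) * g x $ j $ k
      + 0 * (pi_form g P x j * pi_form g P x k)"
    unfolding ricci_def R1_def using S_curv unfolding nn pP ricci_def by (simp add: algebra_simps)
  have r2: "\<And>j k. ricci (R2 C) x j k = ricci (curv (LC g)) x j k + (- (n - 1) * (2 * \<omega> x + \<pi>P) + (n - 1) * (\<omega> x + \<pi>P)) * g x $ j $ k
      + 0 * (pi_form g P x j * pi_form g P x k)"
  proof -
    fix j k
    have "ricci (R2 C) x j k = (\<Sum>i\<in>UNIV. curv C x i i j k) - (\<Sum>i\<in>UNIV. covd C (tors C) x i i j k)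
      + (\<Sum>i\<in>UNIV. covd C (tors C) x j i i k) - (\<Sum>i\<in>UNIV. cycTT (tors C) x i i j k)"
      unfolding ricci_def R2_def by (simp only: sum.distrib sum_subtractf)
    then show "?thesis j k" unfolding S_curv S_a S_b S_cyc nn pP by (simp add: field_simps)
  qed
  have r3: "\<And>j k. ricci (R3 C) x j k = ricci (curv (LC g)) x j k + (- (n - 1) * (2 * \<omega> x + \<pi>P) + (n - 1) * (\<omega> x + \<pi>P)) * g x $ j $ k
      + 0 * (pi_form g P x j * pi_form g P x k)"
  proof -
    fix j k
    have "ricci (R3 C) x j k = (\<Sum>i\<in>UNIV. curv C x i i j k) + (\<Sum>i\<in>UNIV. covd C (tors C) x j i i k)"
      unfolding ricci_def R3_def by (simp only: sum.distrib sum_subtractf)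
    then show "?thesis j k" unfolding S_curv S_b nn pP by (simp add: field_simps)
  qed
  have r4: "\<And>j k. ricci (R4 C) x j k = ricci (curv (LC g)) x j k + (- (n - 1) * (2 * \<omega> x + \<pi>P) + (n - 1) * (\<omega> x + \<pi>P)) * g x $ j $ k
      + (- (n - 1)) * (pi_form g P x j * pi_form g P x k)"
  proof -
    fix j k
    have "ricci (R4 C) x j k = (\<Sum>i\<in>UNIV. curv C x i i j k) + (\<Sum>i\<in>UNIV. covd C (tors C) x j i i k) - (\<Sum>i\<in>UNIV. TT (tors C) x i i j k)"
      unfolding ricci_def R4_def by (simp only: sum.distrib sum_subtractf)
    then show "?thesis j k" unfolding S_curv S_b S_TT nn pP by (simp add: field_simps)
  qed
  have r5: "\<And>j k. ricci (R5 C) x j k = ricci (curv (LC g)) x j k + (- (n - 1) * (2 * \<omega> x + \<pi>P) + 1/2 * ((n - 1) * (\<omega> x + \<pi>P))) * g x $ j $ k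
      + (- (n - 1) / 2) * (pi_form g P x j * pi_form g P x k)"
  proof -
    fix j k
    have "ricci (R5 C) x j k = (\<Sum>i\<in>UNIV. curv C x i i j k) - 1/2 * (\<Sum>i\<in>UNIV. covd C (tors C) x i i j k)
      + 1/2 * (\<Sum>i\<in>UNIV. covd C (tors C) x j i i k) - 1/2 * (\<Sum>i\<in>UNIV. cycTT (tors C) x i i j k) + 1/2 * (\<Sum>i\<in>UNIV. TT (tors C) x i k i j)"
      unfolding ricci_def R5_def by (simp only: sum.distrib sum_subtractf sum_distrib_left)
    then show "?thesis j k" unfolding S_curv S_a S_b S_cyc S_TT5 nn pP by (simp add: field_simps)
  qed
  have n0: "n \<noteq> 0" unfolding n_def by simp
  show ?thesis
  proof (intro allI conjI)
    fix j k
    show "einstein g (R0 C) x j k = Eg x j k + (n - 1) / (4 * n) * \<pi>P * g x $ j $ k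
                                   - (n - 1) / 4 * pi_form g P x j * pi_form g P x k"
      using shift[OF r0, of j k] n0 by (simp add: field_simps)
    show "einstein g (R1 C) x j k = Eg x j k" using shift[OF r1, of j k] by simp
    show "einstein g (R2 C) x j k = Eg x j k" using shift[OF r2, of j k] by simp
    show "einstein g (R3 C) x j k = Eg x j k" using shift[OF r3, of j k] by simp
    show "einstein g (R4 C) x j k = Eg x j k + (n - 1) / n * \<pi>P * g x $ j $ k
                                   - (n - 1) * pi_form g P x j * pi_form g P x k"
      using shift[OF r4, of j k] n0 by (simp add: field_simps)
    show "einstein g (R5 C) x j k = Eg x j k + (n - 1) / (2 * n) * \<pi>P * g x $ j $ k
                                   - (n - 1) / 2 * pi_form g P x j * pi_form g P x k"
      using shift[OF r5, of j k] n0 by (simp add: field_simps)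
  qed
qed

end
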